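(* Let $\mathfrak m=\mathfrak m_{-1}\oplus\mathfrak m_{-2}$ be a non-degenerate graded nilpotent Lie algebra of depth $2$ over $\mathbb C$, generated by $\mathfrak m_{-1}$, with $\dim\mathfrak m_{-2}=2$. Then the Tanaka prolongation of $\mathfrak m$ is infinite-dimensional.
   Context: A GNLA is a negatively graded Lie algebra $\mathfrak m=\bigoplus_{i\ge1}\mathfrak m_{-i}$ generated by $\mathfrak m_{-1}$; non-degenerate means $\mathfrak m_{-1}$ contains no non-zero central element. The Tanaka prolongation $\mathfrak g(\mathfrak m)$ is defined by $\mathfrak g_i(\mathfrak m)=\mathfrak m_i$ for $i<0$ and recursively, for $k\ge0$, $\mathfrak g_k(\mathfrak m)=\{\phi:\mathfrak m\to\bigoplus_{i<k}\mathfrak g_i(\mathfrak m)\text{ linear}\mid \phi(\mathfrak m_{-i})\subset\mathfrak g_{k-i}(\mathfrak m),\ \phi([x,y])=[\phi(x),y]+[x,\phi(y)]\ \forall x,y\in\mathfrak m\}$. *)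

theory Defs
  imports Complex_Main
begin

text \<open>The Lie algebra m is the whole carrier type 'a, a complex vector space
  via the scalar multiplication scale; br is the Lie bracket; M1, M2 are the
  graded pieces m_{-1}, m_{-2}.\<close>

definition lie_algebra :: "(complex \<Rightarrow> 'a::ab_group_add \<Rightarrow> 'a) \<Rightarrow> ('a \<Rightarrow> 'a \<Rightarrow> 'a) \<Rightarrow> bool" where
  "lie_algebra scale br \<longleftrightarrow>
     vector_space scale \<and>
     (\<forall>x y z. br (x + y) z = br x z + br y z) \<and>
     (\<forall>x y z. br x (y + z) = br x y + br x z) \<and>
     (\<forall>c x y. br (scale c x) y = scale c (br x y)) \<and>
     (\<forall>c x y. br x (scale c y) = scale c (br x y)) \<and>
     (\<forall>x. br x x = 0) \<and>
     (\<forall>x y z. br x (br y z) + br y (br z x) + br z (br x y) = 0)"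

definition gnla_depth2 ::
  "(complex \<Rightarrow> 'a::ab_group_add \<Rightarrow> 'a) \<Rightarrow> ('a \<Rightarrow> 'a \<Rightarrow> 'a) \<Rightarrow> 'a set \<Rightarrow> 'a set \<Rightarrow> bool" where
  "gnla_depth2 scale br M1 M2 \<longleftrightarrow>
     lie_algebra scale br \<and>
     (\<exists>B. finite B \<and> module.span scale B = UNIV) \<and>
     module.subspace scale M1 \<and> module.subspace scale M2 \<and>
     M1 \<inter> M2 = {0} \<and> (\<forall>x. \<exists>a\<in>M1. \<exists>b\<in>M2. x = a + b) \<and>
     M2 \<noteq> {0} \<and>
     (\<forall>a\<in>M1. \<forall>b\<in>M1. br a b \<in> M2) \<and>
     (\<forall>a\<in>M1. \<forall>b\<in>M2. br a b = 0) \<and>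
     (\<forall>a\<in>M2. \<forall>b\<in>M1. br a b = 0) \<and>
     (\<forall>a\<in>M2. \<forall>b\<in>M2. br a b = 0) \<and>
     (\<forall>S. module.subspace scale S \<and> M1 \<subseteq> S \<and> (\<forall>x\<in>S. \<forall>y\<in>S. br x y \<in> S)
          \<longrightarrow> S = UNIV)"

definition nondegenerate :: "('a::zero \<Rightarrow> 'a \<Rightarrow> 'a) \<Rightarrow> 'a set \<Rightarrow> bool" where
  "nondegenerate br M1 \<longleftrightarrow> (\<forall>x\<in>M1. (\<forall>y. br x y = 0) \<longrightarrow> x = 0)"

text \<open>Uniform representation of elements of the graded pieces g_i(m):
  an element of g_i with i < 0 is Neg a with a in m_i; an element of g_k with
  k >= 0 is Pos phi, where phi x is the element of (+)_{i<k} g_i written as a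
  family indexed by the degree i (components of degree >= k are the junk value
  Neg 0).\<close>

datatype 'a tel = Neg 'a | Pos "'a \<Rightarrow> int \<Rightarrow> 'a tel"

primrec tadd :: "'a::plus tel \<Rightarrow> 'a::plus tel \<Rightarrow> 'a tel" where
  "tadd (Neg a) t = (case t of Neg b \<Rightarrow> Neg (a + b) | Pos _ \<Rightarrow> Neg undefined)"
| "tadd (Pos f) t = (case t of Pos g \<Rightarrow> Pos (\<lambda>x j. tadd (f x j) (g x j)) | Neg _ \<Rightarrow> Neg undefined)"

primrec tscale :: "(complex \<Rightarrow> 'a \<Rightarrow> 'a) \<Rightarrow> complex \<Rightarrow> 'a tel \<Rightarrow> 'a tel" where
  "tscale scale c (Neg a) = Neg (scale c a)"
| "tscale scale c (Pos f) = Pos (\<lambda>x j. tscale scale c (f x j))"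

text \<open>Canonical zero element of g_i.\<close>
primrec Znat :: "nat \<Rightarrow> int \<Rightarrow> 'a::zero tel" where
  "Znat 0 = (\<lambda>i. Neg 0)"
| "Znat (Suc n) = (\<lambda>i. if i = int n then Pos (\<lambda>x j. if j < i then Znat n j else Neg 0)
                      else Znat n i)"

definition Z :: "int \<Rightarrow> 'a::zero tel" where
  "Z i = Znat (nat i + 1) i"

text \<open>Bracket [u, y] of an element u of g_i with y in m, as a family over degrees.\<close>
definition brk :: "('a::zero \<Rightarrow> 'a \<Rightarrow> 'a) \<Rightarrow> int \<Rightarrow> 'a tel \<Rightarrow> 'a \<Rightarrow> int \<Rightarrow> 'a tel" where
  "brk br i t y = (case t of
      Neg a \<Rightarrow> (\<lambda>j. if j = -2 then Neg (br a y) else Z j)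
    | Pos \<psi> \<Rightarrow> (\<lambda>j. if j < i then \<psi> y j else Z j))"

definition famadd :: "(int \<Rightarrow> 'a::plus tel) \<Rightarrow> (int \<Rightarrow> 'a tel) \<Rightarrow> int \<Rightarrow> 'a tel" where
  "famadd u v = (\<lambda>j. tadd (u j) (v j))"

text \<open>Bracket [u, y] for u in (+)_{i<k} g_i (family u), y in m; the levels below
  -2 are zero, so the sum runs over i = -2 .. k-1.\<close>
definition brF :: "('a::{zero,plus} \<Rightarrow> 'a \<Rightarrow> 'a) \<Rightarrow> int \<Rightarrow> (int \<Rightarrow> 'a tel) \<Rightarrow> 'a \<Rightarrow> int \<Rightarrow> 'a tel" where
  "brF br k u y = foldr famadd (map (\<lambda>i. brk br i (u i) y) [-2..k-1]) Z"

definition Mdeg :: "'a set \<Rightarrow> 'a set \<Rightarrow> int \<Rightarrow> 'a::zero set" where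
  "Mdeg M1 M2 i = (if i = -1 then M1 else if i = -2 then M2 else {0})"

text \<open>Degree k piece, given the previously constructed pieces H i (i < k).\<close>
definition step ::
  "(complex \<Rightarrow> 'a::ab_group_add \<Rightarrow> 'a) \<Rightarrow> ('a \<Rightarrow> 'a \<Rightarrow> 'a) \<Rightarrow> 'a set \<Rightarrow> 'a set
    \<Rightarrow> (int \<Rightarrow> 'a tel set) \<Rightarrow> int \<Rightarrow> 'a tel set" where
  "step scale br M1 M2 H k = {Pos \<phi> | \<phi>.
      (\<forall>x j. j < k \<longrightarrow> \<phi> x j \<in> H j) \<and>
      (\<forall>x j. k \<le> j \<longrightarrow> \<phi> x j = Neg 0) \<and>
      (\<forall>x y j. \<phi> (x + y) j = tadd (\<phi> x j) (\<phi> y j)) \<and>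
      (\<forall>c x j. \<phi> (scale c x) j = tscale scale c (\<phi> x j)) \<and>
      (\<forall>l. \<forall>x \<in> Mdeg M1 M2 (-l). \<forall>j. j < k \<and> j \<noteq> k - l \<longrightarrow> \<phi> x j = Z j) \<and>
      (\<forall>x y j. j < k \<longrightarrow>
          \<phi> (br x y) j = tadd (brF br k (\<phi> x) y j) (tscale scale (-1) (brF br k (\<phi> y) x j)))}"

primrec Gnat ::
  "(complex \<Rightarrow> 'a::ab_group_add \<Rightarrow> 'a) \<Rightarrow> ('a \<Rightarrow> 'a \<Rightarrow> 'a) \<Rightarrow> 'a set \<Rightarrow> 'a set
    \<Rightarrow> nat \<Rightarrow> int \<Rightarrow> 'a tel set" where
  "Gnat scale br M1 M2 0 = (\<lambda>i. if i < 0 then Neg ` Mdeg M1 M2 i else {})"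
| "Gnat scale br M1 M2 (Suc n) = (\<lambda>i. if i = int n then step scale br M1 M2 (Gnat scale br M1 M2 n) (int n)
                                      else Gnat scale br M1 M2 n i)"

definition tanaka :: "(complex \<Rightarrow> 'a::ab_group_add \<Rightarrow> 'a) \<Rightarrow> ('a \<Rightarrow> 'a \<Rightarrow> 'a) \<Rightarrow> 'a set \<Rightarrow> 'a set
    \<Rightarrow> int \<Rightarrow> 'a tel set" where
  "tanaka scale br M1 M2 k = Gnat scale br M1 M2 (nat k + 1) k"

end

theory Submission
  imports Defs "Jordan_Normal_Form.Char_Poly"
begin

lemma Znat_eq: "Znat n j = (if j < int n then Z j else Neg 0)"
proof (induction n arbitrary: j)
  case 0 then show ?case by (simp add: Z_def)
next
  case (Suc n)
  show ?case
  proof (cases "j = int n")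
    case True
    then show ?thesis by (simp add: Z_def)
  next
    case False
    then show ?thesis using Suc by auto
  qed
qed

lemma Z_unfold: "Z j = (if j < 0 then Neg 0 else Pos (\<lambda>x i. if i < j then Z i else Neg 0))"
proof (cases "j < 0")
  case True
  then show ?thesis by (simp add: Z_def)
next
  case False
  then have "Z j = Znat (Suc (nat j)) j" by (simp add: Z_def)
  also have "\<dots> = Pos (\<lambda>x i. if i < j then Znat (nat j) i else Neg 0)" using False by simp
  also have "\<dots> = Pos (\<lambda>x i. if i < j then Z i else Neg 0)"
    using False by (intro arg_cong[where f=Pos] ext) (simp add: Znat_eq)
  finally show ?thesis using False by simp
qed

lemma Z_neg: "j < 0 \<Longrightarrow> Z j = Neg 0" by (subst Z_unfold) simp

lemma tadd_Znat: "tadd (Znat n j) (Znat n j) = (Znat n j :: 'a::monoid_add tel)"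
  by (induction n arbitrary: j) (auto intro!: ext)

lemma tadd_Z: "tadd (Z j) (Z j) = (Z j :: 'a::monoid_add tel)"
  unfolding Z_def by (rule tadd_Znat)

lemma tscale_Znat: "scale c 0 = 0 \<Longrightarrow> tscale scale c (Znat n j) = (Znat n j :: 'a::zero tel)"
  by (induction n arbitrary: j) (auto intro!: ext)

lemma tscale_Z: "scale c 0 = 0 \<Longrightarrow> tscale scale c (Z j) = (Z j :: 'a::zero tel)"
  unfolding Z_def by (rule tscale_Znat)

lemma fold_single:
  assumes "distinct xs" "p \<in> set xs"
    and "\<And>i. i \<in> set xs \<Longrightarrow> i \<noteq> p \<Longrightarrow> f i = Z"
    and "\<And>j. tadd (Z j) (f p j) = f p j" "\<And>j. tadd (f p j) (Z j) = (f p j :: 'a::monoid_add tel)"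
  shows "foldr famadd (map f xs) Z = f p"
proof -
  have "foldr famadd (map f xs) Z = (if p \<in> set xs then f p else Z)"
    using assms(1,3)
  proof (induction xs)
    case Nil then show ?case by simp
  next
    case (Cons a xs)
    show ?case
    proof (cases "a = p")
      case True
      then have "p \<notin> set xs" using Cons.prems by auto
      then show ?thesis using Cons True assms(5) by (auto simp: famadd_def)
    next
      case False
      then have fa: "f a = Z" using Cons.prems by auto
      show ?thesis using Cons False fa assms(4) by (auto simp: famadd_def tadd_Z)
    qed
  qed
  then show ?thesis using assms(2) by simp
qed

lemma brk_Z: "brk br i (Z i) y = (Z :: int \<Rightarrow> 'a::ab_group_add tel)" if "\<forall>y. br 0 y = 0"
proof (rule ext)
  fix j
  show "brk br i (Z i) y j = Z j"
  proof (cases "i < 0")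
    case True
    then show ?thesis using that by (auto simp: brk_def Z_neg)
  next
    case False
    then show ?thesis by (subst Z_unfold) (simp add: brk_def)
  qed
qed

primrec Yn :: "(complex \<Rightarrow> 'a::zero \<Rightarrow> 'a) \<Rightarrow> 'a \<Rightarrow> ('a \<Rightarrow> complex) \<Rightarrow> nat \<Rightarrow> complex \<Rightarrow> 'a tel" where
  "Yn sc v \<beta> 0 c = Neg (sc c v)"
| "Yn sc v \<beta> (Suc n) c = Pos (\<lambda>x j. if j = int n - 1 then Yn sc v \<beta> n (c * \<beta> x)
      else if j < int n then Z j else Neg 0)"

locale telctx = vector_space sc for sc :: "complex \<Rightarrow> 'a::ab_group_add \<Rightarrow> 'a" +
  fixes br :: "'a \<Rightarrow> 'a \<Rightarrow> 'a"
    and M1 M2 :: "'a set" and v w0 :: 'a and \<beta> :: "'a \<Rightarrow> complex"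
  assumes brsc: "\<And>c x y. br (sc c x) y = sc c (br x y)"
    and br0: "\<And>y. br 0 y = 0"
    and badd: "\<And>x y. \<beta> (x + y) = \<beta> x + \<beta> y"
    and bsc: "\<And>c x. \<beta> (sc c x) = c * \<beta> x"
    and bM2: "\<And>x. x \<in> M2 \<Longrightarrow> \<beta> x = 0"
    and bbr: "\<And>x y. \<beta> (br x y) = 0"
    and bv: "\<And>y. br v y = sc (\<beta> y) w0"
    and vM1: "\<And>c. sc c v \<in> M1"
    and M10: "0 \<in> M1" and M20: "0 \<in> M2"
    and vnz: "v \<noteq> 0" and bnz: "\<exists>x. \<beta> x \<noteq> 0"
begin

abbreviation "Y \<equiv> Yn sc v \<beta>"

lemma sc0: "sc c 0 = 0" by simp
lemma sc_zero: "sc 0 x = 0" by simp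
lemma sc_add: "sc a x + sc b x = sc (a + b) x" by (simp add: scale_left_distrib)
lemma sc_sc: "sc a (sc b x) = sc (a * b) x" by simp

lemma b0: "\<beta> 0 = 0" using bM2[OF M20] .

lemma Y_add: "tadd (Y n a) (Y n b) = Y n (a + b)"
proof (induction n arbitrary: a b)
  case 0 then show ?case by (simp add: sc_add)
next
  case (Suc n) then show ?case by (auto intro!: ext simp: tadd_Z distrib_right)
qed

lemma Y_scale: "tscale sc d (Y n a) = Y n (d * a)"
proof (induction n arbitrary: a)
  case 0 then show ?case by (simp add: sc_sc)
next
  case (Suc n) then show ?case by (auto intro!: ext simp: tscale_Z sc0 sc0 mult.assoc)
qed

lemma Y_zero: "Y n 0 = Z (int n - 1)"
proof (induction n)
  case 0 then show ?case by (simp add: sc_zero Z_neg)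
next
  case (Suc n)
  have e: "int (Suc n) - 1 = int n" by simp
  show ?case unfolding e by (subst Z_unfold) (auto intro!: ext simp: Suc)
qed

lemma Y_nz: "c \<noteq> 0 \<Longrightarrow> Y n c \<noteq> Y n 0"
proof (induction n arbitrary: c)
  case 0
  then show ?case using vnz by simp
next
  case (Suc n)
  obtain x where x: "\<beta> x \<noteq> 0" using bnz by auto
  have "Y n (c * \<beta> x) \<noteq> Y n 0" using Suc x by simp
  then show ?case by (auto dest!: fun_cong[where x = x] fun_cong[where x = "int n - 1"])
qed


lemma Gnat_Suc_same[simp]: "Gnat sc br M1 M2 (Suc m) (int m) = step sc br M1 M2 (Gnat sc br M1 M2 m) (int m)"
  by simp

lemma brkY: "brk br (int m - 1) (Y m d) y =
   (\<lambda>j. if j = int m - 2 then (case m of 0 \<Rightarrow> Neg (br (sc d v) y) | Suc p \<Rightarrow> Y p (d * \<beta> y)) else Z j)"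
proof (cases m)
  case 0
  then show ?thesis by (auto intro!: ext simp: brk_def)
next
  case (Suc p)
  then show ?thesis by (auto intro!: ext simp: brk_def)
qed

lemma brkY_neutral:
  "tadd (Z j) (brk br (int m - 1) (Y m d) y j) = brk br (int m - 1) (Y m d) y j"
  "tadd (brk br (int m - 1) (Y m d) y j) (Z j) = brk br (int m - 1) (Y m d) y j"
proof -
  have A: "tadd (Z j) (brk br (int m - 1) (Y m d) y j) = brk br (int m - 1) (Y m d) y j \<and>
     tadd (brk br (int m - 1) (Y m d) y j) (Z j) = brk br (int m - 1) (Y m d) y j"
  proof (cases "j = int m - 2")
    case True
    show ?thesis
    proof (cases m)
      case 0
      then show ?thesis using True by (simp add: brk_def Z_neg)
    next
      case (Suc p)
      then have "Z j = Y p 0" using True by (simp add: Y_zero)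
      then show ?thesis using True Suc by (simp add: brk_def Y_add)
    qed
  next
    case False
    then show ?thesis by (simp add: brkY tadd_Z)
  qed
  then show "tadd (Z j) (brk br (int m - 1) (Y m d) y j) = brk br (int m - 1) (Y m d) y j"
    "tadd (brk br (int m - 1) (Y m d) y j) (Z j) = brk br (int m - 1) (Y m d) y j" by auto
qed

lemma brF_phi:
  assumes "\<And>i. i < int m \<Longrightarrow> i \<noteq> int m - 1 \<Longrightarrow> u i = Z i"
    and "u (int m - 1) = Y m d"
  shows "brF br (int m) u y = brk br (int m - 1) (Y m d) y"
proof -
  have "brF br (int m) u y = foldr famadd (map (\<lambda>i. brk br i (u i) y) [-2..int m - 1]) Z"
    by (simp add: brF_def)
  also have "\<dots> = (\<lambda>i. brk br i (u i) y) (int m - 1)"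
  proof (rule fold_single)
    show "distinct [-2..int m - 1]" by simp
    show "int m - 1 \<in> set [-2..int m - 1]" by simp
    fix i assume "i \<in> set [-2..int m - 1]" "i \<noteq> int m - 1"
    then show "brk br i (u i) y = Z" using assms(1) br0 by (simp add: brk_Z)
  next
    fix j
    show "tadd (Z j) (brk br (int m - 1) (u (int m - 1)) y j) = brk br (int m - 1) (u (int m - 1)) y j"
      "tadd (brk br (int m - 1) (u (int m - 1)) y j) (Z j) = brk br (int m - 1) (u (int m - 1)) y j"
      using brkY_neutral assms(2) by simp_all
  qed
  finally show ?thesis using assms(2) by simp
qed


lemma Y_step:
  assumes IH1: "\<And>c. Y m c \<in> Gnat sc br M1 M2 m (int m - 1)"
    and IH2: "\<And>j. j < int m \<Longrightarrow> Z j \<in> Gnat sc br M1 M2 m j"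
  shows "Y (Suc m) c \<in> step sc br M1 M2 (Gnat sc br M1 M2 m) (int m)"
proof -
  define \<phi> where "\<phi> = (\<lambda>x j. if j = int m - 1 then Y m (c * \<beta> x) else if j < int m then Z j else Neg 0)"
  have Ye: "Y (Suc m) c = Pos \<phi>" by (simp add: \<phi>_def)
  have c1: "\<forall>x j. j < int m \<longrightarrow> \<phi> x j \<in> Gnat sc br M1 M2 m j"
    using IH1 IH2 by (simp add: \<phi>_def)
  have c2: "\<forall>x j. int m \<le> j \<longrightarrow> \<phi> x j = Neg 0" by (simp add: \<phi>_def)
  have c3: "\<forall>x y j. \<phi> (x + y) j = tadd (\<phi> x j) (\<phi> y j)"
    by (simp add: \<phi>_def Y_add badd tadd_Z distrib_left)
  have c4: "\<forall>d x j. \<phi> (sc d x) j = tscale sc d (\<phi> x j)"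
    by (simp add: \<phi>_def Y_scale bsc tscale_Z mult.left_commute)
  have c5: "\<forall>l. \<forall>x \<in> Mdeg M1 M2 (-l). \<forall>j. j < int m \<and> j \<noteq> int m - l \<longrightarrow> \<phi> x j = Z j"
  proof (intro allI ballI impI)
    fix l x j assume x: "x \<in> Mdeg M1 M2 (-l)" and j: "j < int m \<and> j \<noteq> int m - l"
    show "\<phi> x j = Z j"
    proof (cases "j = int m - 1")
      case True
      then have "l \<noteq> 1" using j by auto
      then have "\<beta> x = 0" using x bM2 b0 by (auto simp: Mdeg_def split: if_splits)
      then show ?thesis using True by (simp add: \<phi>_def Y_zero)
    next
      case False then show ?thesis using j by (simp add: \<phi>_def)
    qed
  qed
  have c6: "\<forall>x y j. j < int m \<longrightarrow>
     \<phi> (br x y) j = tadd (brF br (int m) (\<phi> x) y j) (tscale sc (-1) (brF br (int m) (\<phi> y) x j))"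
  proof (intro allI impI)
    fix x y j assume j: "j < int m"
    have L: "\<phi> (br x y) j = Z j" using j by (simp add: \<phi>_def bbr Y_zero)
    have Bx: "brF br (int m) (\<phi> x) y = brk br (int m - 1) (Y m (c * \<beta> x)) y"
      by (rule brF_phi) (simp_all add: \<phi>_def)
    have By: "brF br (int m) (\<phi> y) x = brk br (int m - 1) (Y m (c * \<beta> y)) x"
      by (rule brF_phi) (simp_all add: \<phi>_def)
    have R: "tadd (brk br (int m - 1) (Y m (c * \<beta> x)) y j) (tscale sc (-1) (brk br (int m - 1) (Y m (c * \<beta> y)) x j)) = Z j"
    proof (cases "j = int m - 2")
      case True
      show ?thesis
      proof (cases m)
        case 0
        have "sc (c * \<beta> x) (br v y) + sc (-1) (sc (c * \<beta> y) (br v x)) =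
            sc (c * \<beta> x * \<beta> y + (-1) * (c * \<beta> y * \<beta> x)) w0"
          by (simp only: bv sc_sc sc_add mult.assoc)
        also have "\<dots> = 0" by (simp add: algebra_simps)
        finally show ?thesis using True 0 by (simp add: brk_def brsc Z_neg)
      next
        case (Suc p)
        have "c * \<beta> x * \<beta> y + - (c * \<beta> y * \<beta> x) = 0" by (simp add: algebra_simps)
        then show ?thesis using True Suc by (simp add: brk_def Y_scale Y_add Y_zero)
      qed
    next
      case False
      then show ?thesis by (simp add: brkY tscale_Z tadd_Z)
    qed
    show "\<phi> (br x y) j = tadd (brF br (int m) (\<phi> x) y j) (tscale sc (-1) (brF br (int m) (\<phi> y) x j))"
      using L R Bx By by simp
  qed
  show ?thesis unfolding step_def using Ye c1 c2 c3 c4 c5 c6 by blast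
qed

lemma Y_mem: "(\<forall>c. Y n c \<in> Gnat sc br M1 M2 n (int n - 1)) \<and> (\<forall>j < int n. Z j \<in> Gnat sc br M1 M2 n j)"
proof (induction n)
  case 0
  show ?case using vM1 M10 M20 by (auto simp: Mdeg_def Z_neg)
next
  case (Suc m)
  have A: "\<And>c. Y (Suc m) c \<in> Gnat sc br M1 M2 (Suc m) (int (Suc m) - 1)"
    using Y_step Suc by simp
  have B: "Z j \<in> Gnat sc br M1 M2 (Suc m) j" if "j < int (Suc m)" for j
  proof (cases "j = int m")
    case True
    have e: "int (Suc m) - 1 = int m" by simp
    have "Z (int m) = Y (Suc m) 0" using Y_zero[of "Suc m"] unfolding e by (rule sym)
    then show ?thesis using A[of 0] True unfolding e by simp
  next
    case False
    then show ?thesis using Suc that by simp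
  qed
  show ?case using A B by blast
qed

lemma main: "infinite {k. \<exists>t \<in> tanaka sc br M1 M2 k. t \<noteq> Z k}"
proof -
  have "range int \<subseteq> {k. \<exists>t \<in> tanaka sc br M1 M2 k. t \<noteq> Z k}"
  proof
    fix k assume "k \<in> range int"
    then obtain m where k: "k = int m" by auto
    have "Y (Suc m) 1 \<in> tanaka sc br M1 M2 k"
      using Y_mem[of "Suc m"] k by (simp add: tanaka_def)
    moreover have "Y (Suc m) 1 \<noteq> Z k"
    proof -
      have e: "int (Suc m) - 1 = int m" by simp
      have "Z (int m) = Y (Suc m) 0" using Y_zero[of "Suc m"] unfolding e by (rule sym)
      then show ?thesis using Y_nz[of 1 "Suc m"] k by simp
    qed
    ultimately show "k \<in> {k. \<exists>t \<in> tanaka sc br M1 M2 k. t \<noteq> Z k}" by blast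
  qed
  moreover have "infinite (range (int :: nat \<Rightarrow> int))"
  proof -
    have "inj (int :: nat \<Rightarrow> int)" by (simp add: inj_on_def)
    then show ?thesis using finite_imageD infinite_UNIV_nat by blast
  qed
  ultimately show ?thesis using finite_subset by blast
qed

end


lemma pencil:
  fixes A B :: "complex mat"
  assumes A: "A \<in> carrier_mat n n" and B: "B \<in> carrier_mat n n" and n: "n > 0"
  shows "\<exists>c s t. c \<in> carrier_vec n \<and> c \<noteq> 0\<^sub>v n \<and> (s \<noteq> 0 \<or> t \<noteq> 0) \<and>
     (\<forall>j<n. s * (A *\<^sub>v c) $ j + t * (B *\<^sub>v c) $ j = 0)"
proof (cases "det B = 0")
  case True
  then obtain c where c: "c \<in> carrier_vec n" "c \<noteq> 0\<^sub>v n" "B *\<^sub>v c = 0\<^sub>v n"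
    using det_0_iff_vec_prod_zero[OF B] by auto
  then show ?thesis by (intro exI[of _ c] exI[of _ 0] exI[of _ 1]) auto
next
  case False
  from det_non_zero_imp_unit[OF B this, of "()"]
  obtain Bi where Bi: "Bi \<in> carrier_mat n n" "B * Bi = 1\<^sub>m n"
    unfolding Units_def ring_mat_def by auto
  define C where "C = Bi * A"
  have C: "C \<in> carrier_mat n n" using Bi A by (simp add: C_def)
  have "\<not> constant (poly (char_poly C))"
    unfolding constant_degree using degree_monic_char_poly[OF C] n by simp
  from fundamental_theorem_of_algebra[OF this] obtain \<mu> where "poly (char_poly C) \<mu> = 0" by blast
  then have "eigenvalue C \<mu>" using eigenvalue_root_char_poly[OF C] by simp
  then obtain x where x: "x \<in> carrier_vec n" "x \<noteq> 0\<^sub>v n" "C *\<^sub>v x = \<mu> \<cdot>\<^sub>v x"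
    unfolding eigenvalue_def eigenvector_def using C by auto
  have BC: "B * C = A" unfolding C_def
    using Bi A B by (metis assoc_mult_mat left_mult_one_mat)
  have "A *\<^sub>v x = B *\<^sub>v (C *\<^sub>v x)" using BC B C x by (metis assoc_mult_mat_vec)
  also have "\<dots> = \<mu> \<cdot>\<^sub>v (B *\<^sub>v x)" using x B by (simp add: mult_mat_vec)
  finally have Ax: "A *\<^sub>v x = \<mu> \<cdot>\<^sub>v (B *\<^sub>v x)" .
  have "\<forall>j<n. 1 * (A *\<^sub>v x) $ j + - \<mu> * (B *\<^sub>v x) $ j = 0" using Ax B by simp
  then show ?thesis using x by (intro exI[of _ x] exI[of _ 1] exI[of _ "-\<mu>"]) auto
qed


lemma key:
  fixes sc :: "complex \<Rightarrow> 'a::ab_group_add \<Rightarrow> 'a" and br :: "'a \<Rightarrow> 'a \<Rightarrow> 'a"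
  assumes G: "gnla_depth2 sc br M1 M2" and N: "nondegenerate br M1"
    and D: "vector_space.dim sc M2 = 2"
  shows "\<exists>v w0 \<beta>. v \<in> M1 \<and> v \<noteq> 0 \<and> (\<forall>y. br v y = sc (\<beta> y) w0) \<and>
     (\<forall>x y. \<beta> (x + y) = \<beta> x + \<beta> y) \<and> (\<forall>c x. \<beta> (sc c x) = c * \<beta> x) \<and>
     (\<forall>x\<in>M2. \<beta> x = 0) \<and> (\<forall>x y. \<beta> (br x y) = 0)"
proof -
  have L: "lie_algebra sc br" using G by (simp add: gnla_depth2_def)
  interpret vector_space sc using L by (simp add: lie_algebra_def)
  have ba1: "\<And>x y z. br (x + y) z = br x z + br y z" using L by (simp add: lie_algebra_def)
  have ba2: "\<And>x y z. br x (y + z) = br x y + br x z" using L by (simp add: lie_algebra_def)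
  have bs1: "\<And>c x y. br (sc c x) y = sc c (br x y)" using L by (simp add: lie_algebra_def)
  have bs2: "\<And>c x y. br x (sc c y) = sc c (br x y)" using L by (simp add: lie_algebra_def)
  have S1: "subspace M1" using G by (simp add: gnla_depth2_def)
  have S2: "subspace M2" using G by (simp add: gnla_depth2_def)
  have dec: "\<And>x. \<exists>a\<in>M1. \<exists>b\<in>M2. x = a + b" using G by (simp add: gnla_depth2_def)
  have M2nz: "M2 \<noteq> {0}" using G by (simp add: gnla_depth2_def)
  have b11: "\<And>a b. a \<in> M1 \<Longrightarrow> b \<in> M1 \<Longrightarrow> br a b \<in> M2" using G by (simp add: gnla_depth2_def)
  have b12: "\<And>a b. a \<in> M1 \<Longrightarrow> b \<in> M2 \<Longrightarrow> br a b = 0" using G by (simp add: gnla_depth2_def)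
  have b21: "\<And>a b. a \<in> M2 \<Longrightarrow> b \<in> M1 \<Longrightarrow> br a b = 0" using G by (simp add: gnla_depth2_def)
  have b22: "\<And>a b. a \<in> M2 \<Longrightarrow> b \<in> M2 \<Longrightarrow> br a b = 0" using G by (simp add: gnla_depth2_def)
  have gen: "\<And>S. subspace S \<Longrightarrow> M1 \<subseteq> S \<Longrightarrow> (\<forall>x\<in>S. \<forall>y\<in>S. br x y \<in> S) \<Longrightarrow> S = UNIV"
    using G by (simp add: gnla_depth2_def)
  have br0l: "\<And>y. br 0 y = 0" using bs1[of 0] by simp
  have br0r: "\<And>y. br y 0 = 0" using bs2[of _ 0] by simp
  have brM2: "br x y \<in> M2" for x y
  proof -
    obtain a b where ab: "a \<in> M1" "b \<in> M2" "x = a + b" using dec by blast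
    obtain a' b' where ab': "a' \<in> M1" "b' \<in> M2" "y = a' + b'" using dec by blast
    have "br x y = br a a'" using ab ab' by (simp add: ba1 ba2 b12 b21 b22)
    then show ?thesis using b11 ab ab' by simp
  qed
  obtain E where E: "E \<subseteq> M1" "independent E" "M1 \<subseteq> span E" using basis_exists[of M1] by metis
  have "\<exists>Bf. finite Bf \<and> span Bf = UNIV" using G by (simp add: gnla_depth2_def)
  then obtain Bf where Bf: "finite Bf" "span Bf = UNIV" by blast
  have finE: "finite E" using independent_span_bound[OF Bf(1) E(2)] Bf(2) by simp
  have spanE: "span E \<subseteq> M1" using E(1) S1 span_minimal by blast
  obtain es where es: "set es = E" "distinct es" using finite_distinct_list[OF finE] by blast
  define n where "n = length es"
  define e where "e = (\<lambda>i. es ! i)"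
  have eM1: "i < n \<Longrightarrow> e i \<in> M1" for i using es E(1) by (auto simp: e_def n_def)
  have npos: "n > 0"
  proof (rule ccontr)
    assume "\<not> n > 0"
    then have "E = {}" using es by (simp add: n_def)
    then have "M1 \<subseteq> {0}" using E(3) by simp
    then have "{0} = (UNIV :: 'a set)" using gen[of "{0}"] br0l by auto
    then show False using M2nz S2 subspace_0 by blast
  qed
  obtain W where W: "W \<subseteq> M2" "independent W" "M2 \<subseteq> span W" "card W = dim M2"
    using basis_exists[of M2] by metis
  have "card W = 2" using W(4) D by simp
  then obtain w1 w2 where w12: "W = {w1, w2}" "w1 \<noteq> w2" by (auto simp: card_2_iff)
  define p1 where "p1 = (\<lambda>z. representation W z w1)"
  define p2 where "p2 = (\<lambda>z. representation W z w2)"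
  have coord: "z = sc (p1 z) w1 + sc (p2 z) w2" if "z \<in> M2" for z
  proof -
    have "(\<Sum>b\<in>W. sc (representation W z b) b) = z"
      using sum_representation_eq[of W z W] W that w12 by auto
    then show ?thesis using w12 by (simp add: p1_def p2_def)
  qed
  have p_add: "p1 (z + z') = p1 z + p1 z'" "p2 (z + z') = p2 z + p2 z'" if "z \<in> M2" "z' \<in> M2" for z z'
  proof -
    have zs: "z \<in> span W" "z' \<in> span W" using that W(3) by auto
    show "p1 (z + z') = p1 z + p1 z'" "p2 (z + z') = p2 z + p2 z'"
      using representation_add[OF W(2) zs(2) zs(1)] by (simp_all add: p1_def p2_def)
  qed
  have p_sc: "p1 (sc r z) = r * p1 z" "p2 (sc r z) = r * p2 z" if "z \<in> M2" for z r
  proof -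
    have zs: "z \<in> span W" using that W(3) by auto
    show "p1 (sc r z) = r * p1 z" "p2 (sc r z) = r * p2 z"
      using representation_scale[OF W(2) zs, of r] by (simp_all add: p1_def p2_def)
  qed
  have p_0: "p1 0 = 0" "p2 0 = 0" by (simp_all add: p1_def p2_def representation_zero)
  have p_sum: "p1 (sum f I) = (\<Sum>i\<in>I. p1 (f i))" "p2 (sum f I) = (\<Sum>i\<in>I. p2 (f i))"
    if "\<And>i. i \<in> I \<Longrightarrow> f i \<in> M2" for f and I :: "nat set"
  proof -
    have zs: "\<And>i. i \<in> I \<Longrightarrow> f i \<in> span W" using that W(3) by auto
    show "p1 (sum f I) = (\<Sum>i\<in>I. p1 (f i))" "p2 (sum f I) = (\<Sum>i\<in>I. p2 (f i))"
    proof -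
      have "representation W (sum f I) = (\<lambda>b. \<Sum>i\<in>I. representation W (f i) b)"
        by (rule representation_sum[OF W(2)]) (use zs in auto)
      then show "p1 (sum f I) = (\<Sum>i\<in>I. p1 (f i))" "p2 (sum f I) = (\<Sum>i\<in>I. p2 (f i))"
        by (simp_all add: p1_def p2_def)
    qed
  qed
  define A where "A = mat n n (\<lambda>(j, i). p1 (br (e i) (e j)))"
  define B where "B = mat n n (\<lambda>(j, i). p2 (br (e i) (e j)))"
  have AB: "A \<in> carrier_mat n n" "B \<in> carrier_mat n n" by (simp_all add: A_def B_def)
  obtain c s t where cst: "c \<in> carrier_vec n" "c \<noteq> 0\<^sub>v n" "s \<noteq> 0 \<or> t \<noteq> 0"
    "\<And>j. j < n \<Longrightarrow> s * (A *\<^sub>v c) $ j + t * (B *\<^sub>v c) $ j = 0"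
    using pencil[OF AB npos] by blast
  define v where "v = (\<Sum>i<n. sc (c $ i) (e i))"
  have vM1: "v \<in> M1" unfolding v_def using eM1 S1 by (auto intro!: subspace_sum subspace_scale)
  have brsum: "br (sum f I) y = (\<Sum>i\<in>I. br (f i) y)" for f and I :: "nat set" and y
    by (induction I rule: infinite_finite_induct) (auto simp: br0l ba1)
  have brv: "br v y = (\<Sum>i<n. sc (c $ i) (br (e i) y))" for y
    by (simp add: v_def brsum bs1)
  have vnz: "v \<noteq> 0"
  proof
    assume v0: "v = 0"
    have bij: "bij_betw e {..<n} E" using bij_betw_nth[OF es(2)] es by (simp add: e_def n_def)
    define u where "u = (\<lambda>b. c $ (the_inv_into {..<n} e b))"
    have "(\<Sum>b\<in>E. sc (u b) b) = (\<Sum>i<n. sc (u (e i)) (e i))"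
      using sum.reindex[of e "{..<n}" "\<lambda>b. sc (u b) b"] bij by (simp add: bij_betw_def)
    also have "\<dots> = v" unfolding v_def u_def
      using bij by (intro sum.cong refl) (simp add: bij_betw_def the_inv_into_f_f)
    finally have "(\<Sum>b\<in>E. sc (u b) b) = 0" using v0 by simp
    then have "\<forall>b\<in>E. u b = 0" using independentD[OF E(2) finE subset_refl] by blast
    then have "\<forall>i<n. c $ i = 0" using bij
      by (auto simp: u_def bij_betw_def the_inv_into_f_f)
    then have "c = 0\<^sub>v n" using cst(1) by (intro eq_vecI) auto
    then show False using cst(2) by simp
  qed
  define Om where "Om = (\<lambda>u. s * p1 (br v u) + t * p2 (br v u))"
  have Om_e: "Om (e j) = 0" if j: "j < n" for j
  proof -
    have "p1 (br v (e j)) = (\<Sum>i<n. c $ i * p1 (br (e i) (e j)))"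
      unfolding brv using eM1 j by (subst p_sum) (auto intro!: subspace_scale[OF S2] brM2 simp: p_sc brM2)
    also have "\<dots> = (A *\<^sub>v c) $ j"
      using j cst(1) by (auto simp: A_def scalar_prod_def mult.commute intro!: sum.cong)
    finally have 1: "p1 (br v (e j)) = (A *\<^sub>v c) $ j" .
    have "p2 (br v (e j)) = (\<Sum>i<n. c $ i * p2 (br (e i) (e j)))"
      unfolding brv using eM1 j by (subst p_sum) (auto intro!: subspace_scale[OF S2] brM2 simp: p_sc brM2)
    also have "\<dots> = (B *\<^sub>v c) $ j"
      using j cst(1) by (auto simp: B_def scalar_prod_def mult.commute intro!: sum.cong)
    finally have 2: "p2 (br v (e j)) = (B *\<^sub>v c) $ j" .
    show ?thesis using 1 2 cst(4)[OF j] by (simp add: Om_def)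
  qed
  have Om_span: "Om u = 0" if "u \<in> span E" for u
    using that
  proof (induction rule: span_induct)
    case base
    show ?case
    proof (rule subspaceI)
      show "0 \<in> Collect (\<lambda>u. Om u = 0)" by (simp add: Om_def br0r p_0)
    next
      fix x y assume "x \<in> Collect (\<lambda>u. Om u = 0)" "y \<in> Collect (\<lambda>u. Om u = 0)"
      then show "x + y \<in> Collect (\<lambda>u. Om u = 0)"
        by (simp add: Om_def ba2 p_add brM2 algebra_simps)
    next
      fix r x assume "x \<in> Collect (\<lambda>u. Om u = 0)"
      then have "r * Om x = 0" by simp
      then show "sc r x \<in> Collect (\<lambda>u. Om u = 0)"
        by (simp add: Om_def bs2 p_sc brM2 algebra_simps)
    qed
  next
    case (step x)
    then obtain j where "j < n" "x = e j" using es by (auto simp: in_set_conv_nth e_def n_def)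
    then show ?case using Om_e by simp
  qed
  have Om_all: "Om y = 0" for y
  proof -
    obtain a b where ab: "a \<in> M1" "b \<in> M2" "y = a + b" using dec by blast
    have "br v y = br v a" using ab vM1 by (simp add: ba2 b12)
    moreover have "Om a = 0" using Om_span ab E(3) by blast
    ultimately show ?thesis by (simp add: Om_def)
  qed
  obtain q w0 where q: "\<And>z z'. z \<in> M2 \<Longrightarrow> z' \<in> M2 \<Longrightarrow> q (z + z') = q z + q z'"
    "\<And>z r. z \<in> M2 \<Longrightarrow> q (sc r z) = r * q z" "q 0 = 0"
    "\<And>y. br v y = sc (q (br v y)) w0"
  proof (cases "t = 0")
    case True
    then have s: "s \<noteq> 0" using cst(3) by simp
    have "p1 (br v y) = 0" for y using Om_all[of y] True s by (simp add: Om_def)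
    then have *: "br v y = sc (p2 (br v y)) w2" for y using coord[OF brM2, of v y] by simp
    show ?thesis by (rule that[of p2 w2]) (use p_add p_sc p_0 * in auto)
  next
    case False
    have p2e: "p2 (br v y) = p1 (br v y) * (- (s / t))" for y
      using Om_all[of y] False by (simp add: Om_def field_simps add_eq_0_iff)
    have *: "br v y = sc (p1 (br v y)) (w1 + sc (- (s / t)) w2)" for y
    proof -
      have "br v y = sc (p1 (br v y)) w1 + sc (p2 (br v y)) w2" using coord[OF brM2, of v y] .
      also have "\<dots> = sc (p1 (br v y)) w1 + sc (p1 (br v y)) (sc (- (s / t)) w2)"
        by (simp only: p2e scale_scale)
      also have "\<dots> = sc (p1 (br v y)) (w1 + sc (- (s / t)) w2)"
        by (simp only: scale_right_distrib)
      finally show ?thesis .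
    qed
    show ?thesis by (rule that[of p1 "w1 + sc (- (s / t)) w2"]) (use p_add p_sc p_0 * in auto)
  qed
  define \<beta> where "\<beta> = (\<lambda>y. q (br v y))"
  have h1: "\<forall>y. br v y = sc (\<beta> y) w0" unfolding \<beta>_def using q(4) by blast
  have h2: "\<forall>x y. \<beta> (x + y) = \<beta> x + \<beta> y" by (simp add: \<beta>_def ba2 q(1) brM2)
  have h3: "\<forall>r x. \<beta> (sc r x) = r * \<beta> x" by (simp add: \<beta>_def bs2 q(2) brM2)
  have h4: "\<forall>x\<in>M2. \<beta> x = 0" using vM1 by (simp add: \<beta>_def b12 q(3))
  have h5: "\<forall>x y. \<beta> (br x y) = 0" using vM1 brM2 by (simp add: \<beta>_def b12 q(3))
  show ?thesis
    by (rule exI[of _ v], rule exI[of _ w0], rule exI[of _ \<beta>]) (intro conjI vM1 vnz h1 h2 h3 h4 h5)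
qed


theorem theorem4:
  fixes scale :: "complex \<Rightarrow> 'a::ab_group_add \<Rightarrow> 'a"
    and br :: "'a \<Rightarrow> 'a \<Rightarrow> 'a"
    and M1 M2 :: "'a set"
  assumes "gnla_depth2 scale br M1 M2"
    and "nondegenerate br M1"
    and "vector_space.dim scale M2 = 2"
  shows "infinite {k. \<exists>t \<in> tanaka scale br M1 M2 k. t \<noteq> Z k}"
proof -
  obtain v w0 \<beta> where H: "v \<in> M1" "v \<noteq> 0" "\<forall>y. br v y = scale (\<beta> y) w0"
     "\<forall>x y. \<beta> (x + y) = \<beta> x + \<beta> y" "\<forall>c x. \<beta> (scale c x) = c * \<beta> x"
     "\<forall>x\<in>M2. \<beta> x = 0" "\<forall>x y. \<beta> (br x y) = 0"
    using key[OF assms] by metis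
  have L: "lie_algebra scale br" using assms(1) by (simp add: gnla_depth2_def)
  interpret vector_space scale using L by (simp add: lie_algebra_def)
  have brsc: "\<And>c x y. br (scale c x) y = scale c (br x y)" using L by (simp add: lie_algebra_def)
  have br0: "\<And>y. br 0 y = 0" using brsc[of 0] by simp
  have S1: "subspace M1" using assms(1) by (simp add: gnla_depth2_def)
  have S2: "subspace M2" using assms(1) by (simp add: gnla_depth2_def)
  have bnz: "\<exists>x. \<beta> x \<noteq> 0"
  proof (rule ccontr)
    assume "\<not> (\<exists>x. \<beta> x \<noteq> 0)"
    then have "\<forall>y. br v y = 0" using H(3) by simp
    then show False using assms(2) H(1,2) by (simp add: nondegenerate_def)
  qed
  interpret T: telctx scale br M1 M2 v w0 \<beta>
  proof unfold_locales
    show "\<And>c x y. br (scale c x) y = scale c (br x y)" by (rule brsc)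
    show "\<And>y. br 0 y = 0" by (rule br0)
    show "\<And>x y. \<beta> (x + y) = \<beta> x + \<beta> y" using H(4) by blast
    show "\<And>c x. \<beta> (scale c x) = c * \<beta> x" using H(5) by blast
    show "\<And>x. x \<in> M2 \<Longrightarrow> \<beta> x = 0" using H(6) by blast
    show "\<And>x y. \<beta> (br x y) = 0" using H(7) by blast
    show "\<And>y. br v y = scale (\<beta> y) w0" using H(3) by blast
    show "\<And>c. scale c v \<in> M1" using S1 H(1) by (rule subspace_scale)
    show "0 \<in> M1" using S1 by (rule subspace_0)
    show "0 \<in> M2" using S2 by (rule subspace_0)
    show "v \<noteq> 0" by (rule H(2))
    show "\<exists>x. \<beta> x \<noteq> 0" by (rule bnz)
  qed
  show ?thesis by (rule T.main)
qed

end
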